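(* Let $M\in[0,1]^{n\times d}$, $\mu>0$, $\sigma>0$, and set $\lambda_1=1-e^{-\mu}$. Let $\tilde Y\in\mathbb{R}^{n\times d}$ be generated as follows: the $N_{ij}$, $(i,j)\in[n]\times[d]$, are i.i.d. $\mathrm{Poisson}(\mu)$; independently, $(\tilde Y_{i,j,k})_{i,j,k\geq1}$ are independent with $\tilde Y_{i,j,k}-M_{ij}$ centered and $\sigma^2$-subGaussian; and $\tilde Y_{ij}=\frac{1}{N_{ij}}\sum_{k=1}^{N_{ij}}\tilde Y_{i,j,k}$ with the convention $0/0=0$. Then for any nonempty $T\subseteq[n]\times[d]$ and any $\delta\in(0,1)$, with probability at least $1-\delta$, \[ \frac{1}{|T|}\Big|\sum_{(i,j)\in T}\big(\tilde Y_{ij}-\lambda_1M_{ij}\big)\Big|\leq\sqrt{2(1\vee\sigma^2)e^2\log(2/\delta)\lambda_1/|T|}+2(1\vee\sigma)\log(2/\delta)/|T| . \]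
   Context: A centered random variable $W$ is $\sigma^2$-subGaussian if $\mathbb{E}[\exp(tW)]\leq\exp(t^2\sigma^2/2)$ for all $t\in\mathbb{R}$. $e=\exp(1)$. *)

theory Defs
  imports "HOL-Probability.Probability"
begin

text \<open>The moment generating function is taken as a nonnegative integral, so no
  integrability side condition is hidden.\<close>
definition centered_subgaussian :: "'a measure \<Rightarrow> ('a \<Rightarrow> real) \<Rightarrow> real \<Rightarrow> bool" where
  "centered_subgaussian P W s2 \<longleftrightarrow>
     integrable P W \<and> integral\<^sup>L P W = 0 \<and>
     (\<forall>t::real. (\<integral>\<^sup>+ x. ennreal (exp (t * W x)) \<partial>P) \<le> ennreal (exp (t\<^sup>2 * s2 / 2)))"

definition avg_obs :: "(nat \<Rightarrow> nat \<Rightarrow> 'a \<Rightarrow> nat) \<Rightarrow> (nat \<Rightarrow> nat \<Rightarrow> nat \<Rightarrow> 'a \<Rightarrow> real) \<Rightarrow> nat \<Rightarrow> nat \<Rightarrow> 'a \<Rightarrow> real" where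
  "avg_obs N Y i j x = (if N i j x = 0 then 0
      else (\<Sum>k\<in>{1..N i j x}. Y i j k x) / real (N i j x))"

end

theory Submission
  imports Defs
begin


lemma exp_quad:
  fixes y :: real assumes "\<bar>y\<bar> \<le> 1" shows "exp y \<le> 1 + y + y\<^sup>2"
proof (cases "y \<ge> 0")
  case True then show ?thesis using exp_bound[of y] assms by auto
next
  case False
  define u where "u = - y"
  have u: "0 \<le> u" "u \<le> 1" using False assms by (auto simp: u_def)
  have l: "1 + u + u\<^sup>2/2 \<le> exp u" using exp_lower_Taylor_quadratic u by auto
  have "(1 - u + u\<^sup>2) * (1 + u + u\<^sup>2/2) = 1 + u\<^sup>2/2 + u^3/2 + u^4/2"
    by (simp add: power2_eq_square power3_eq_cube power4_eq_xxxx field_simps)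
  also have "\<dots> \<ge> 1" using u by simp
  finally have 1: "1 \<le> (1 - u + u\<^sup>2) * (1 + u + u\<^sup>2/2)" .
  have p: "0 \<le> 1 - u + u\<^sup>2" using u by (simp add: power2_eq_square)
  have "(1 - u + u\<^sup>2) * (1 + u + u\<^sup>2/2) \<le> (1 - u + u\<^sup>2) * exp u"
    using mult_left_mono[OF l p] .
  with 1 have "1 \<le> (1 - u + u\<^sup>2) * exp u" by linarith
  hence "exp (-u) \<le> 1 - u + u\<^sup>2"
    by (simp add: exp_minus field_simps)
  thus ?thesis by (simp add: u_def)
qed

lemma e_sq_bound: "2 + 3/2 * exp (1::real) \<le> (exp 1)\<^sup>2"
proof -
  have "5/2 \<le> exp (1::real)" using exp_lower_Taylor_quadratic[of 1] by simp
  hence "0 \<le> (exp (1::real) - 5/2) * (exp 1 + 1)" by (intro mult_nonneg_nonneg) auto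
  thus ?thesis by (simp add: power2_eq_square algebra_simps)
qed

lemma cell_real_key:
  fixes a \<sigma> t s :: real
  assumes a: "0 \<le> a" "a \<le> 1" and sg: "\<sigma> > 0" and s: "s = max 1 \<sigma>"
    and t: "\<bar>t\<bar> * s \<le> 1"
  shows "exp (t * a + t\<^sup>2 * \<sigma>\<^sup>2 / 2) - 1 - t * a \<le> (exp 1)\<^sup>2 * s\<^sup>2 * t\<^sup>2 / 2"
proof -
  define y where "y = t * a"
  define q where "q = t\<^sup>2 * \<sigma>\<^sup>2 / 2"
  have s1: "s \<ge> 1" "s \<ge> \<sigma>" using s by auto
  have ta: "\<bar>t\<bar> \<le> 1" using t s1 mult_left_mono[of 1 s "\<bar>t\<bar>"] by simp
  have ts: "\<bar>t\<bar> * \<sigma> \<le> 1" using t s1 mult_left_mono[of \<sigma> s "\<bar>t\<bar>"] by simp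
  have y1: "\<bar>y\<bar> \<le> 1" using ta a mult_mono[of "\<bar>t\<bar>" 1 a 1] by (simp add: y_def abs_mult)
  have ysq: "y\<^sup>2 \<le> t\<^sup>2"
  proof -
    have "a\<^sup>2 \<le> 1" using a by (simp add: power_le_one)
    hence "t\<^sup>2 * a\<^sup>2 \<le> t\<^sup>2 * 1" by (intro mult_left_mono) auto
    thus ?thesis by (simp add: y_def power_mult_distrib)
  qed
  have q0: "0 \<le> q" by (simp add: q_def)
  have qq: "q \<le> 1/2"
  proof -
    have "(\<bar>t\<bar> * \<sigma>)\<^sup>2 \<le> 1" using ts sg by (simp add: power_le_one)
    thus ?thesis by (simp add: q_def power_mult_distrib)
  qed
  have eq: "exp q - 1 \<le> 3/2 * q"
  proof -
    have "exp q \<le> 1 + q + q\<^sup>2" using exp_bound[of q] q0 qq by auto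
    moreover have "q * q \<le> q * (1/2)" using q0 qq by (intro mult_left_mono) auto
    ultimately show ?thesis by (simp add: power2_eq_square)
  qed
  have ey: "exp y \<le> exp 1" using y1 by simp
  have "exp (y + q) - 1 - y = (exp y - 1 - y) + exp y * (exp q - 1)"
    by (simp add: exp_add algebra_simps)
  also have "\<dots> \<le> y\<^sup>2 + exp 1 * (3/2 * q)"
  proof -
    have "exp y * (exp q - 1) \<le> exp 1 * (3/2 * q)"
      using ey eq q0 by (intro mult_mono) auto
    thus ?thesis using exp_quad[OF y1] by linarith
  qed
  also have "\<dots> \<le> t\<^sup>2 * s\<^sup>2 + exp 1 * (3/4 * (t\<^sup>2 * s\<^sup>2))"
  proof -
    have "t\<^sup>2 * 1 \<le> t\<^sup>2 * s\<^sup>2" using s1 by (intro mult_left_mono) (auto simp: one_le_power)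
    moreover have "\<sigma>\<^sup>2 \<le> s\<^sup>2" using s1 sg by (simp add: power_mono)
    hence "t\<^sup>2 * \<sigma>\<^sup>2 \<le> t\<^sup>2 * s\<^sup>2" by (intro mult_left_mono) auto
    hence "q \<le> t\<^sup>2 * s\<^sup>2 / 2" by (simp add: q_def ac_simps)
    hence "3/2 * q \<le> 3/4 * (t\<^sup>2 * s\<^sup>2)" by linarith
    hence "exp 1 * (3/2 * q) \<le> exp 1 * (3/4 * (t\<^sup>2 * s\<^sup>2))" by (intro mult_left_mono) auto
    ultimately show ?thesis using ysq by linarith
  qed
  also have "\<dots> = (2 + 3/2 * exp 1) * (s\<^sup>2 * t\<^sup>2) / 2" by (simp add: algebra_simps)
  also have "\<dots> \<le> (exp 1)\<^sup>2 * (s\<^sup>2 * t\<^sup>2) / 2"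
    using e_sq_bound by (intro divide_right_mono mult_right_mono) auto
  finally show ?thesis by (simp add: mult_ac y_def q_def)
qed

lemma cell_real:
  fixes \<mu> a \<sigma> t s lam :: real
  assumes mu: "\<mu> > 0" and a: "0 \<le> a" "a \<le> 1" and sg: "\<sigma> > 0" and s: "s = max 1 \<sigma>"
    and t: "\<bar>t\<bar> * s \<le> 1" and lam: "lam = 1 - exp (-\<mu>)"
  shows "exp (-\<mu>) * exp (-t * lam * a) + lam * exp (t * (1 - lam) * a + t\<^sup>2 * \<sigma>\<^sup>2 / 2)
          \<le> exp (lam * (exp 1)\<^sup>2 * s\<^sup>2 * t\<^sup>2 / 2)"
proof -
  define u where "u = exp (t * a + t\<^sup>2 * \<sigma>\<^sup>2 / 2)"
  have lam01: "0 < lam" using mu lam by auto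
  have "exp (-\<mu>) * exp (-t * lam * a) + lam * exp (t * (1 - lam) * a + t\<^sup>2 * \<sigma>\<^sup>2 / 2)
      = exp (-t * lam * a) * (1 + lam * (u - 1))"
  proof -
    have e: "exp (-\<mu>) = 1 - lam" using lam by simp
    have "t * (1 - lam) * a + t\<^sup>2 * \<sigma>\<^sup>2 / 2 = -t * lam * a + (t * a + t\<^sup>2 * \<sigma>\<^sup>2 / 2)"
      by (simp add: algebra_simps)
    hence "exp (t * (1 - lam) * a + t\<^sup>2 * \<sigma>\<^sup>2 / 2) = exp (-t * lam * a) * u"
      by (simp add: u_def mult_exp_exp algebra_simps)
    thus ?thesis unfolding e by (simp add: algebra_simps)
  qed
  also have "\<dots> \<le> exp (-t * lam * a) * exp (lam * (u - 1))"
    by (intro mult_left_mono) auto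
  also have "\<dots> = exp (lam * (u - 1 - t * a))" by (simp add: algebra_simps flip: exp_add)
  also have "\<dots> \<le> exp (lam * ((exp 1)\<^sup>2 * s\<^sup>2 * t\<^sup>2 / 2))"
    using cell_real_key[OF a sg s t] lam01 unfolding u_def by (subst exp_le_cancel_iff) (intro mult_left_mono; auto)
  finally show ?thesis by (simp add: mult_ac)
qed

lemma chernoff_real:
  fixes V L s t :: real
  assumes V: "V > 0" and L: "L > 0" and s: "s > 0" and t: "t = min (sqrt (2 * L / V)) (1 / s)"
  shows "- t * (sqrt (2 * V * L) + 2 * s * L) + V * t\<^sup>2 / 2 \<le> - L"
proof -
  have t0: "t > 0" using V L s t by auto
  have "t\<^sup>2 \<le> (sqrt (2 * L / V))\<^sup>2" using t t0 by (intro power_mono) auto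
  hence "V * t\<^sup>2 \<le> V * (2 * L / V)" using V L by (intro mult_left_mono) auto
  hence A: "V * t\<^sup>2 / 2 \<le> L" using V by simp
  have B: "t * (sqrt (2 * V * L) + 2 * s * L) \<ge> 2 * L"
  proof (cases "sqrt (2 * L / V) \<le> 1 / s")
    case True
    hence "t = sqrt (2 * L / V)" using t by simp
    hence "t * sqrt (2 * V * L) = sqrt (2 * L / V * (2 * V * L))" by (simp only: real_sqrt_mult)
    also have "2 * L / V * (2 * V * L) = (2 * L)\<^sup>2" using V by (simp add: power2_eq_square field_simps)
    also have "sqrt ((2 * L)\<^sup>2) = 2 * L" using L by (simp only: real_sqrt_abs)
    finally have "t * sqrt (2 * V * L) = 2 * L" .
    moreover have "0 \<le> t * (2 * s * L)" using t0 s L by simp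
    ultimately show ?thesis by (simp add: distrib_left)
  next
    case False
    hence "t = 1 / s" using t by simp
    hence "t * (2 * s * L) = 2 * L" using s by simp
    moreover have "0 \<le> t * sqrt (2 * V * L)" using t0 V L by simp
    ultimately show ?thesis by (simp only: distrib_left)
  qed
  show ?thesis using A B by linarith
qed



lemma poisson_sums:
  fixes \<mu> :: real shows "(\<lambda>k. \<mu>^k / fact k * exp (-\<mu>)) sums 1"
proof -
  have "(\<lambda>k. \<mu>^k / fact k) sums exp \<mu>" using exp_converges[of \<mu>]
    by (simp add: divide_inverse mult.commute)
  from sums_mult2[OF this, of "exp (-\<mu>)"] show ?thesis by (simp add: exp_minus)
qed

lemma avg_obs_meas:
  assumes Nm: "N i j \<in> measurable M (count_space UNIV)"
    and Ym: "\<And>k. k \<ge> 1 \<Longrightarrow> Y i j k \<in> borel_measurable M"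
  shows "avg_obs N Y i j \<in> borel_measurable M"
proof -
  have "avg_obs N Y i j = (\<lambda>x. (\<lambda>m x. if m = 0 then 0 else (\<Sum>k\<in>{1..m}. Y i j k x) / real m) (N i j x) x)"
    by (auto simp: avg_obs_def fun_eq_iff)
  also have "\<dots> \<in> borel_measurable M"
  proof (rule measurable_compose_countable[OF _ Nm])
    fix m :: nat
    show "(\<lambda>x. if m = 0 then 0 else (\<Sum>k\<in>{1..m}. Y i j k x) / real m) \<in> borel_measurable M"
    proof (cases "m = 0")
      case True then show ?thesis by simp
    next
      case False
      have "(\<lambda>x. (\<Sum>k\<in>{1..m}. Y i j k x)) \<in> borel_measurable M"
        by (rule borel_measurable_sum) (auto intro: Ym)
      then show ?thesis using False by simp
    qed
  qed
  finally show ?thesis .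
qed

lemma (in prob_space) cell_mgf:
  fixes N :: "nat \<Rightarrow> nat \<Rightarrow> 'a \<Rightarrow> nat" and Y :: "nat \<Rightarrow> nat \<Rightarrow> nat \<Rightarrow> 'a \<Rightarrow> real"
  assumes indep: "indep_vars (\<lambda>_. borel)
                  (\<lambda>z x. case z of Inl (i, j) \<Rightarrow> real (N i j x) | Inr (i, j, k) \<Rightarrow> Y i j k x) I"
    and IL: "Inl (i,j) \<in> I" and IR: "\<And>k. k \<ge> 1 \<Longrightarrow> Inr (i,j,k) \<in> I"
    and Nm: "N i j \<in> measurable M (count_space UNIV)"
    and Np: "distr M (count_space UNIV) (N i j) = measure_pmf (poisson_pmf \<mu>)"
    and Ys: "\<And>k. k \<ge> 1 \<Longrightarrow> centered_subgaussian M (\<lambda>x. Y i j k x - a) (\<sigma>\<^sup>2)"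
    and mu: "\<mu> > 0" and sg: "\<sigma> > 0" and a: "0 \<le> a" "a \<le> 1"
    and t: "\<bar>t\<bar> * max 1 \<sigma> \<le> 1"
  shows "(\<integral>\<^sup>+x. ennreal (exp (t * (avg_obs N Y i j x - (1 - exp (-\<mu>)) * a))) \<partial>M)
         \<le> ennreal (exp ((1 - exp (-\<mu>)) * (exp 1)\<^sup>2 * (max 1 \<sigma>)\<^sup>2 * t\<^sup>2 / 2))"
proof -
  define lam where "lam = 1 - exp (-\<mu>)"
  define Z where "Z x = avg_obs N Y i j x - lam * a" for x
  define Xf where "Xf = (\<lambda>z x. case z of Inl (i, j) \<Rightarrow> real (N i j x) | Inr (i, j, k) \<Rightarrow> Y i j k x)"
  define p where "p m = pmf (poisson_pmf \<mu>) m" for m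
  define c0 where "c0 = exp (-t*lam*a)"
  define C1 where "C1 = exp (t*(1-lam)*a + t\<^sup>2*\<sigma>\<^sup>2/2)"
  have rv: "\<And>w. w \<in> I \<Longrightarrow> Xf w \<in> borel_measurable M"
    using indep unfolding Xf_def by (auto simp: indep_vars_def)
  have Ym[measurable]: "Y i j k \<in> borel_measurable M" if "k \<ge> 1" for k
    using rv[OF IR[OF that]] by (simp add: Xf_def)
  have Zm[measurable]: "Z \<in> borel_measurable M"
    unfolding Z_def using avg_obs_meas[of N i j M Y, OF Nm Ym] by simp
  have eqset: "{x \<in> space M. N i j x = m} = N i j -` {m} \<inter> space M" for m by auto
  have Nset[measurable]: "{x \<in> space M. N i j x = m} \<in> sets M" for m
    unfolding eqset by (rule measurable_sets[OF Nm]) simp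
  have pm: "emeasure M {x \<in> space M. N i j x = m} = ennreal (p m)" for m
  proof -
    have "emeasure M {x \<in> space M. N i j x = m} = emeasure (distr M (count_space UNIV) (N i j)) {m}"
      unfolding eqset using Nm by (subst emeasure_distr) auto
    also have "\<dots> = ennreal (p m)" by (simp add: Np emeasure_pmf_single p_def)
    finally show ?thesis .
  qed
  have dec: "(\<integral>\<^sup>+x. ennreal (exp (t * Z x)) \<partial>M)
     = (\<Sum>m. \<integral>\<^sup>+x. ennreal (exp (t * Z x)) * indicator {x \<in> space M. N i j x = m} x \<partial>M)"
  proof -
    have "(\<integral>\<^sup>+x. ennreal (exp (t * Z x)) \<partial>M)
       = (\<integral>\<^sup>+x. (\<Sum>m. ennreal (exp (t * Z x)) * indicator {x \<in> space M. N i j x = m} x) \<partial>M)"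
    proof (rule nn_integral_cong)
      fix x assume x: "x \<in> space M"
      have "(\<Sum>m. ennreal (exp (t * Z x)) * indicator {x \<in> space M. N i j x = m} x)
          = (\<Sum>m\<in>{N i j x}. ennreal (exp (t * Z x)) * indicator {x \<in> space M. N i j x = m} x)"
        by (rule suminf_finite) (auto simp: indicator_def)
      also have "\<dots> = ennreal (exp (t * Z x))" using x by (simp add: indicator_def)
      finally show "ennreal (exp (t * Z x)) = (\<Sum>m. ennreal (exp (t * Z x)) * indicator {x \<in> space M. N i j x = m} x)"
        by simp
    qed
    also have "\<dots> = (\<Sum>m. \<integral>\<^sup>+x. ennreal (exp (t * Z x)) * indicator {x \<in> space M. N i j x = m} x \<partial>M)"
      by (rule nn_integral_suminf) measurable
    finally show ?thesis .
  qed
  have term0: "(\<integral>\<^sup>+x. ennreal (exp (t * Z x)) * indicator {x \<in> space M. N i j x = 0} x \<partial>M)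
     = ennreal (p 0 * c0)"
  proof -
    have "(\<integral>\<^sup>+x. ennreal (exp (t * Z x)) * indicator {x \<in> space M. N i j x = 0} x \<partial>M)
       = (\<integral>\<^sup>+x. ennreal c0 * indicator {x \<in> space M. N i j x = 0} x \<partial>M)"
      by (rule nn_integral_cong) (auto simp: indicator_def Z_def avg_obs_def c0_def)
    also have "\<dots> = ennreal c0 * ennreal (p 0)" by (simp only: nn_integral_cmult_indicator[OF Nset] pm)
    finally show ?thesis by (simp add: ennreal_mult mult.commute c0_def p_def)
  qed
  have termS: "(\<integral>\<^sup>+x. ennreal (exp (t * Z x)) * indicator {x \<in> space M. N i j x = m} x \<partial>M)
     \<le> ennreal (p m * C1)" if m0: "m \<noteq> 0" for m
  proof -
    define J where "J = insert (Inl (i,j)) ((\<lambda>k. Inr (i,j,k)) ` {1..m})"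
    define h :: "(nat \<times> nat) + (nat \<times> nat \<times> nat) \<Rightarrow> real \<Rightarrow> ennreal"
      where "h w r = (case w of Inl _ \<Rightarrow> indicator {real m} r | Inr _ \<Rightarrow> ennreal (exp ((t / real m) * (r - a))))" for w r
    have JI: "J \<subseteq> I" using IL IR by (auto simp: J_def)
    have finJ: "finite J" by (simp add: J_def)
    have hm: "h w \<in> borel_measurable borel" for w
    proof (cases w)
      case (Inl c)
      then have "h w = (\<lambda>r. indicator {real m} r)" by (simp add: fun_eq_iff h_def)
      then show ?thesis by simp
    next
      case (Inr c)
      then have "h w = (\<lambda>r. ennreal (exp ((t / real m) * (r - a))))" by (simp add: fun_eq_iff h_def)
      then show ?thesis by simp
    qed
    have indJ: "indep_vars (\<lambda>_. borel) (\<lambda>w x. h w (Xf w x)) J"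
      by (rule indep_vars_compose2[OF indep_vars_subset[OF indep[folded Xf_def] JI]]) (rule hm)
    have prodeq: "(\<Prod>w\<in>J. h w (Xf w x)) = h (Inl (i,j)) (real (N i j x)) * (\<Prod>k\<in>{1..m}. ennreal (exp ((t / real m) * (Y i j k x - a))))" for x
    proof -
      have "(\<Prod>w\<in>J. h w (Xf w x)) = h (Inl (i,j)) (Xf (Inl (i,j)) x) * (\<Prod>w\<in>(\<lambda>k. Inr (i,j,k)) ` {1..m}. h w (Xf w x))"
        unfolding J_def by (subst prod.insert) auto
      also have "(\<Prod>w\<in>(\<lambda>k. Inr (i,j,k)) ` {1..m}. h w (Xf w x)) = (\<Prod>k\<in>{1..m}. h (Inr (i,j,k)) (Xf (Inr (i,j,k)) x))"
        by (subst prod.reindex) (auto simp: inj_on_def)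
      finally show ?thesis by (simp add: Xf_def h_def)
    qed
    have zeq: "t * Z x = t * (1 - lam) * a + (\<Sum>k\<in>{1..m}. (t / real m) * (Y i j k x - a))" if "N i j x = m" for x
    proof -
      have "(\<Sum>k\<in>{1..m}. (t / real m) * (Y i j k x - a)) = (t / real m) * ((\<Sum>k\<in>{1..m}. Y i j k x) - real m * a)"
        by (simp only: sum_distrib_left[symmetric] sum_subtractf sum_constant card_atLeastAtMost) simp
      also have "\<dots> = t * (\<Sum>k\<in>{1..m}. Y i j k x) / real m - t * a" using m0 by (simp add: field_simps)
      finally show ?thesis using that m0 by (simp add: Z_def avg_obs_def algebra_simps)
    qed
    have "(\<integral>\<^sup>+x. ennreal (exp (t * Z x)) * indicator {x \<in> space M. N i j x = m} x \<partial>M)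
       = (\<integral>\<^sup>+x. ennreal (exp (t * (1 - lam) * a)) * (\<Prod>w\<in>J. h w (Xf w x)) \<partial>M)"
    proof (rule nn_integral_cong)
      fix x assume x: "x \<in> space M"
      show "ennreal (exp (t * Z x)) * indicator {x \<in> space M. N i j x = m} x = ennreal (exp (t * (1 - lam) * a)) * (\<Prod>w\<in>J. h w (Xf w x))"
      proof (cases "N i j x = m")
        case True
        have "exp (t * Z x) = exp (t * (1 - lam) * a) * (\<Prod>k\<in>{1..m}. exp ((t / real m) * (Y i j k x - a)))"
          using zeq[OF True] by (simp add: exp_add exp_sum)
        then show ?thesis using x True unfolding prodeq
          by (simp add: h_def indicator_def prod_ennreal ennreal_mult prod_nonneg)
      next
        case False
        then show ?thesis using x unfolding prodeq by (simp add: h_def indicator_def)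
      qed
    qed
    also have "\<dots> = ennreal (exp (t * (1 - lam) * a)) * (\<integral>\<^sup>+x. (\<Prod>w\<in>J. h w (Xf w x)) \<partial>M)"
    proof (rule nn_integral_cmult)
      show "(\<lambda>x. \<Prod>w\<in>J. h w (Xf w x)) \<in> borel_measurable M"
      proof (rule borel_measurable_prod_ennreal)
        fix w assume "w \<in> J"
        then show "(\<lambda>x. h w (Xf w x)) \<in> borel_measurable M" using indJ by (simp add: indep_vars_def)
      qed
    qed
    also have "(\<integral>\<^sup>+x. (\<Prod>w\<in>J. h w (Xf w x)) \<partial>M) = (\<Prod>w\<in>J. \<integral>\<^sup>+x. h w (Xf w x) \<partial>M)"
      by (rule indep_vars_nn_integral[OF finJ indJ]) simp
    also have "\<dots> = (\<integral>\<^sup>+x. h (Inl (i,j)) (Xf (Inl (i,j)) x) \<partial>M) * (\<Prod>k\<in>{1..m}. \<integral>\<^sup>+x. h (Inr (i,j,k)) (Xf (Inr (i,j,k)) x) \<partial>M)"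
    proof -
      have "(\<Prod>w\<in>J. \<integral>\<^sup>+x. h w (Xf w x) \<partial>M) = (\<integral>\<^sup>+x. h (Inl (i,j)) (Xf (Inl (i,j)) x) \<partial>M) * (\<Prod>w\<in>(\<lambda>k. Inr (i,j,k)) ` {1..m}. \<integral>\<^sup>+x. h w (Xf w x) \<partial>M)"
        unfolding J_def by (subst prod.insert) auto
      also have "(\<Prod>w\<in>(\<lambda>k. Inr (i,j,k)) ` {1..m}. \<integral>\<^sup>+x. h w (Xf w x) \<partial>M) = (\<Prod>k\<in>{1..m}. \<integral>\<^sup>+x. h (Inr (i,j,k)) (Xf (Inr (i,j,k)) x) \<partial>M)"
        by (subst prod.reindex) (auto simp: inj_on_def)
      finally show ?thesis .
    qed
    also have "(\<integral>\<^sup>+x. h (Inl (i,j)) (Xf (Inl (i,j)) x) \<partial>M) = ennreal (p m)"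
    proof -
      have "(\<integral>\<^sup>+x. h (Inl (i,j)) (Xf (Inl (i,j)) x) \<partial>M) = (\<integral>\<^sup>+x. indicator {x \<in> space M. N i j x = m} x \<partial>M)"
        by (rule nn_integral_cong) (auto simp: h_def Xf_def indicator_def)
      also have "\<dots> = ennreal (p m)" by (simp add: pm)
      finally show ?thesis .
    qed
    finally have eq1: "(\<integral>\<^sup>+x. ennreal (exp (t * Z x)) * indicator {x \<in> space M. N i j x = m} x \<partial>M) = ennreal (exp (t * (1 - lam) * a)) * (ennreal (p m) * (\<Prod>k\<in>{1..m}. \<integral>\<^sup>+x. h (Inr (i,j,k)) (Xf (Inr (i,j,k)) x) \<partial>M))" .
    have le1: "(\<Prod>k\<in>{1..m}. \<integral>\<^sup>+x. h (Inr (i,j,k)) (Xf (Inr (i,j,k)) x) \<partial>M) \<le> (\<Prod>k\<in>{1..m}. ennreal (exp ((t / real m)\<^sup>2 * \<sigma>\<^sup>2 / 2)))"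
    proof (rule prod_mono_ennreal)
      fix k assume k: "k \<in> {1..m}"
      have "(\<integral>\<^sup>+x. h (Inr (i,j,k)) (Xf (Inr (i,j,k)) x) \<partial>M) = (\<integral>\<^sup>+x. ennreal (exp ((t / real m) * (Y i j k x - a))) \<partial>M)"
        by (simp add: h_def Xf_def)
      also have "\<dots> \<le> ennreal (exp ((t / real m)\<^sup>2 * \<sigma>\<^sup>2 / 2))"
      proof -
        from Ys[of k] k have "\<forall>s. (\<integral>\<^sup>+x. ennreal (exp (s * (Y i j k x - a))) \<partial>M) \<le> ennreal (exp (s\<^sup>2 * \<sigma>\<^sup>2 / 2))"
          by (simp add: centered_subgaussian_def)
        then show ?thesis by (rule spec)
      qed
      finally show "(\<integral>\<^sup>+x. h (Inr (i,j,k)) (Xf (Inr (i,j,k)) x) \<partial>M) \<le> ennreal (exp ((t / real m)\<^sup>2 * \<sigma>\<^sup>2 / 2))" .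
    qed
    also have "(\<Prod>k\<in>{1..m}. ennreal (exp ((t / real m)\<^sup>2 * \<sigma>\<^sup>2 / 2))) \<le> ennreal (exp (t\<^sup>2 * \<sigma>\<^sup>2 / 2))"
    proof -
      have "(\<Prod>k\<in>{1..m}. ennreal (exp ((t / real m)\<^sup>2 * \<sigma>\<^sup>2 / 2))) = ennreal (exp ((t / real m)\<^sup>2 * \<sigma>\<^sup>2 / 2) ^ m)"
        by (simp add: ennreal_power)
      also have "exp ((t / real m)\<^sup>2 * \<sigma>\<^sup>2 / 2) ^ m = exp (real m * ((t / real m)\<^sup>2 * \<sigma>\<^sup>2 / 2))"
        by (rule exp_of_nat_mult[symmetric])
      also have "real m * ((t / real m)\<^sup>2 * \<sigma>\<^sup>2 / 2) = (t\<^sup>2 * \<sigma>\<^sup>2 / 2) / real m"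
        using m0 by (simp add: power2_eq_square field_simps)
      also have "\<dots> \<le> t\<^sup>2 * \<sigma>\<^sup>2 / 2"
      proof -
        have "(t\<^sup>2 * \<sigma>\<^sup>2 / 2) * 1 \<le> (t\<^sup>2 * \<sigma>\<^sup>2 / 2) * real m"
          using m0 by (intro mult_left_mono) auto
        then show ?thesis using m0 by (simp add: divide_le_eq)
      qed
      finally show ?thesis by (simp add: ennreal_leI)
    qed
    finally have le2: "(\<Prod>k\<in>{1..m}. \<integral>\<^sup>+x. h (Inr (i,j,k)) (Xf (Inr (i,j,k)) x) \<partial>M) \<le> ennreal (exp (t\<^sup>2 * \<sigma>\<^sup>2 / 2))" .
    have "ennreal (exp (t * (1 - lam) * a)) * (ennreal (p m) * (\<Prod>k\<in>{1..m}. \<integral>\<^sup>+x. h (Inr (i,j,k)) (Xf (Inr (i,j,k)) x) \<partial>M)) \<le> ennreal (exp (t * (1 - lam) * a)) * (ennreal (p m) * ennreal (exp (t\<^sup>2 * \<sigma>\<^sup>2 / 2)))"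
      by (intro mult_left_mono le2) auto
    then show ?thesis unfolding eq1 by (simp add: C1_def exp_add ennreal_mult mult_ac p_def)
  qed
  define r where "r m = p m * (if m = 0 then c0 else C1)" for m
  have p0: "p 0 = exp (-\<mu>)" using mu by (simp add: p_def)
  have psums: "p sums 1" using poisson_sums[of \<mu>] mu by (simp add: p_def[abs_def])
  have rnn: "0 \<le> r m" for m by (simp add: r_def p_def c0_def C1_def)
  have rsums: "r sums (exp (-\<mu>) * c0 + lam * C1)"
  proof -
    have "(\<lambda>m. p m * C1 + (if m = 0 then p 0 * (c0 - C1) else 0)) sums (1 * C1 + p 0 * (c0 - C1))"
      by (intro sums_add sums_mult2 psums sums_single)
    moreover have "(\<lambda>m. p m * C1 + (if m = 0 then p 0 * (c0 - C1) else 0)) = r"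
      by (auto simp: fun_eq_iff r_def algebra_simps)
    moreover have "1 * C1 + p 0 * (c0 - C1) = exp (-\<mu>) * c0 + lam * C1"
      by (simp add: p0 lam_def algebra_simps)
    ultimately show ?thesis by simp
  qed
  have "(\<integral>\<^sup>+x. ennreal (exp (t * Z x)) \<partial>M) \<le> (\<Sum>m. ennreal (r m))"
    unfolding dec
  proof (rule suminf_le)
    fix m show "(\<integral>\<^sup>+x. ennreal (exp (t * Z x)) * indicator {x \<in> space M. N i j x = m} x \<partial>M) \<le> ennreal (r m)"
      using term0 termS[of m] by (cases "m = 0") (auto simp: r_def)
  qed auto
  also have "(\<Sum>m. ennreal (r m)) = ennreal (exp (-\<mu>) * c0 + lam * C1)"
    using suminf_ennreal2[of r, OF rnn] rsums by (simp add: sums_iff)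
  also have "\<dots> \<le> ennreal (exp ((1 - exp (-\<mu>)) * (exp 1)\<^sup>2 * (max 1 \<sigma>)\<^sup>2 * t\<^sup>2 / 2))"
    using cell_real[OF mu a sg refl t, of lam] unfolding lam_def c0_def C1_def
    by (intro ennreal_leI) simp
  finally show ?thesis by (simp add: Z_def lam_def)
qed

lemma (in prob_space) joint_mgf:
  fixes N :: "nat \<Rightarrow> nat \<Rightarrow> 'a \<Rightarrow> nat" and Y :: "nat \<Rightarrow> nat \<Rightarrow> nat \<Rightarrow> 'a \<Rightarrow> real"
    and Mat :: "nat \<Rightarrow> nat \<Rightarrow> real"
  assumes Mat_range: "\<And>i j. i < n \<Longrightarrow> j < d \<Longrightarrow> 0 \<le> Mat i j \<and> Mat i j \<le> 1"
    and mu: "\<mu> > 0" and sg: "\<sigma> > 0"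
    and N_meas: "\<And>i j. i < n \<Longrightarrow> j < d \<Longrightarrow> N i j \<in> measurable M (count_space UNIV)"
    and N_poisson: "\<And>i j. i < n \<Longrightarrow> j < d \<Longrightarrow>
                      distr M (count_space UNIV) (N i j) = measure_pmf (poisson_pmf \<mu>)"
    and Y_subg: "\<And>i j k. i < n \<Longrightarrow> j < d \<Longrightarrow> k \<ge> 1 \<Longrightarrow>
                      centered_subgaussian M (\<lambda>x. Y i j k x - Mat i j) (\<sigma>\<^sup>2)"
    and indep: "indep_vars (\<lambda>_. borel)
                  (\<lambda>z x. case z of Inl (i, j) \<Rightarrow> real (N i j x) | Inr (i, j, k) \<Rightarrow> Y i j k x)
                  (Inl ` ({..<n} \<times> {..<d}) \<union> Inr ` ({..<n} \<times> {..<d} \<times> {1..}))"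
    and T_sub: "T \<subseteq> {..<n} \<times> {..<d}"
    and t: "\<bar>t\<bar> * max 1 \<sigma> \<le> 1"
  shows "(\<integral>\<^sup>+x. ennreal (exp (t * (\<Sum>(i, j)\<in>T. avg_obs N Y i j x - (1 - exp (- \<mu>)) * Mat i j))) \<partial>M)
         \<le> ennreal (exp (real (card T) * ((1 - exp (-\<mu>)) * (exp 1)\<^sup>2 * (max 1 \<sigma>)\<^sup>2 * t\<^sup>2 / 2)))"
proof -
  define lam where "lam = 1 - exp (-\<mu>)"
  define v where "v = lam * (exp 1)\<^sup>2 * (max 1 \<sigma>)\<^sup>2 * t\<^sup>2 / 2"
  define I where "I = Inl ` ({..<n} \<times> {..<d}) \<union> Inr ` ({..<n} \<times> {..<d} \<times> {1::nat..})"
  define Xf where "Xf = (\<lambda>z x. case z of Inl (i, j) \<Rightarrow> real (N i j x) | Inr (i, j, k) \<Rightarrow> Y i j k x)"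
  define K where "K c = insert (Inl c) ((\<lambda>k. Inr (fst c, snd c, k)) ` {1::nat..})" for c :: "nat \<times> nat"
  define Zc where "Zc c x = avg_obs N Y (fst c) (snd c) x - lam * Mat (fst c) (snd c)" for c x
  define F where "F c \<omega> = (let m = nat \<lfloor>\<omega> (Inl c)\<rfloor> in if m = 0 then 0 else (\<Sum>k\<in>{1..m}. \<omega> (Inr (fst c, snd c, k))) / real m) - lam * Mat (fst c) (snd c)" for c \<omega>
  have finT: "finite T" using T_sub finite_subset by blast
  have KI: "K c \<subseteq> I" if "c \<in> T" for c using that T_sub by (auto simp: K_def I_def)
  have disj: "disjoint_family_on K T" by (auto simp: disjoint_family_on_def K_def)
  have indR: "indep_vars (\<lambda>c. PiM (K c) (\<lambda>_. borel)) (\<lambda>c \<omega>. restrict (\<lambda>w. Xf w \<omega>) (K c)) T"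
    by (rule indep_vars_restrict[OF indep[folded Xf_def I_def] KI disj])
  have Fm: "F c \<in> borel_measurable (PiM (K c) (\<lambda>_. borel))" for c
  proof -
    have g: "(\<lambda>\<omega>. nat \<lfloor>\<omega> (Inl c) :: real\<rfloor>) \<in> measurable (PiM (K c) (\<lambda>_. borel)) (count_space UNIV)"
    proof -
      have "(\<lambda>\<omega>. \<omega> (Inl c)) \<in> measurable (PiM (K c) (\<lambda>_. borel)) (borel :: real measure)"
        by (rule measurable_component_singleton) (simp add: K_def)
      then have "(\<lambda>\<omega>. \<lfloor>\<omega> (Inl c) :: real\<rfloor>) \<in> measurable (PiM (K c) (\<lambda>_. borel)) (count_space UNIV)"
        by (rule measurable_compose[OF _ measurable_real_floor])
      then show ?thesis by (rule measurable_compose) simp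
    qed
    have "(\<lambda>\<omega>. (\<lambda>m \<omega>. if m = 0 then 0 else (\<Sum>k\<in>{1..m}. \<omega> (Inr (fst c, snd c, k))) / real m) (nat \<lfloor>\<omega> (Inl c)\<rfloor>) \<omega>)
          \<in> borel_measurable (PiM (K c) (\<lambda>_. borel))"
    proof (rule measurable_compose_countable[OF _ g])
      fix m :: nat
      have "(\<lambda>\<omega>. (\<Sum>k\<in>{1..m}. \<omega> (Inr (fst c, snd c, k)) :: real)) \<in> borel_measurable (PiM (K c) (\<lambda>_. borel))"
      proof (rule borel_measurable_sum)
        fix k assume "k \<in> {1..m}"
        then show "(\<lambda>\<omega>. \<omega> (Inr (fst c, snd c, k)) :: real) \<in> borel_measurable (PiM (K c) (\<lambda>_. borel))"
          by (intro measurable_component_singleton) (auto simp: K_def)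
      qed
      then have h: "(\<lambda>\<omega>. (\<Sum>k\<in>{1..m}. \<omega> (Inr (fst c, snd c, k))) / real m) \<in> borel_measurable (PiM (K c) (\<lambda>_. borel))"
        by (rule borel_measurable_divide) simp
      show "(\<lambda>\<omega>. if m = 0 then 0 else (\<Sum>k\<in>{1..m}. \<omega> (Inr (fst c, snd c, k))) / real m) \<in> borel_measurable (PiM (K c) (\<lambda>_. borel))"
        using h by (cases "m = 0") simp_all
    qed
    then show ?thesis unfolding F_def Let_def by simp
  qed
  have indG: "indep_vars (\<lambda>_. borel) (\<lambda>c x. ennreal (exp (t * F c (restrict (\<lambda>w. Xf w x) (K c))))) T"
    by (rule indep_vars_compose2[OF indR, where Y="\<lambda>c \<omega>. ennreal (exp (t * F c \<omega>))"]) (use Fm in simp)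
  have Feq: "F c (restrict (\<lambda>w. Xf w x) (K c)) = Zc c x" for c x
  proof -
    have "Inl c \<in> K c" by (simp add: K_def)
    then have n: "nat \<lfloor>restrict (\<lambda>w. Xf w x) (K c) (Inl c)\<rfloor> = N (fst c) (snd c) x"
      by (simp add: Xf_def split: prod.split)
    have s: "(\<Sum>k\<in>{1..m}. restrict (\<lambda>w. Xf w x) (K c) (Inr (fst c, snd c, k))) = (\<Sum>k\<in>{1..m}. Y (fst c) (snd c) k x)" for m
      by (rule sum.cong) (auto simp: K_def Xf_def)
    show ?thesis unfolding F_def Let_def n s by (simp add: Zc_def avg_obs_def)
  qed
  have indZ: "indep_vars (\<lambda>_. borel) (\<lambda>c x. ennreal (exp (t * Zc c x))) T"
    using indG by (simp add: Feq)
  have "(\<integral>\<^sup>+x. ennreal (exp (t * (\<Sum>(i, j)\<in>T. avg_obs N Y i j x - (1 - exp (- \<mu>)) * Mat i j))) \<partial>M)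
      = (\<integral>\<^sup>+x. (\<Prod>c\<in>T. ennreal (exp (t * Zc c x))) \<partial>M)"
  proof (rule nn_integral_cong)
    fix x
    have "(\<Sum>(i, j)\<in>T. avg_obs N Y i j x - (1 - exp (- \<mu>)) * Mat i j) = (\<Sum>c\<in>T. Zc c x)"
      by (simp add: Zc_def lam_def split_def)
    then show "ennreal (exp (t * (\<Sum>(i, j)\<in>T. avg_obs N Y i j x - (1 - exp (- \<mu>)) * Mat i j))) = (\<Prod>c\<in>T. ennreal (exp (t * Zc c x)))"
      by (simp add: sum_distrib_left exp_sum finT prod_ennreal)
  qed
  also have "\<dots> = (\<Prod>c\<in>T. \<integral>\<^sup>+x. ennreal (exp (t * Zc c x)) \<partial>M)"
    by (rule indep_vars_nn_integral[OF finT indZ]) simp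
  also have "\<dots> \<le> (\<Prod>c\<in>T. ennreal (exp v))"
  proof (rule prod_mono_ennreal)
    fix c assume c: "c \<in> T"
    obtain i j where ij: "c = (i, j)" by (cases c)
    have ij': "i < n" "j < d" using c T_sub ij by auto
    have "(\<integral>\<^sup>+x. ennreal (exp (t * Zc c x)) \<partial>M) = (\<integral>\<^sup>+x. ennreal (exp (t * (avg_obs N Y i j x - (1 - exp (-\<mu>)) * Mat i j))) \<partial>M)"
      by (simp add: Zc_def ij lam_def)
    also have "\<dots> \<le> ennreal (exp v)"
      unfolding v_def lam_def
      by (rule cell_mgf[OF indep, of i j]) (use ij' Mat_range[OF ij'] in \<open>auto intro: N_meas N_poisson Y_subg mu sg t\<close>)
    finally show "(\<integral>\<^sup>+x. ennreal (exp (t * Zc c x)) \<partial>M) \<le> ennreal (exp v)" .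
  qed
  also have "(\<Prod>c\<in>T. ennreal (exp v)) = ennreal (exp (real (card T) * v))"
    by (simp add: ennreal_power exp_of_nat_mult)
  finally show ?thesis by (simp add: v_def lam_def)
qed

theorem mainTheorem5:
  fixes P :: "'a measure"
    and n d :: nat
    and Mat :: "nat \<Rightarrow> nat \<Rightarrow> real"
    and \<mu> \<sigma> \<delta> :: real
    and N :: "nat \<Rightarrow> nat \<Rightarrow> 'a \<Rightarrow> nat"
    and Y :: "nat \<Rightarrow> nat \<Rightarrow> nat \<Rightarrow> 'a \<Rightarrow> real"
    and T :: "(nat \<times> nat) set"
  assumes P: "prob_space P"
    and Mat_range: "\<And>i j. i < n \<Longrightarrow> j < d \<Longrightarrow> 0 \<le> Mat i j \<and> Mat i j \<le> 1"
    and mu_pos: "\<mu> > 0" and sigma_pos: "\<sigma> > 0"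
    and N_meas: "\<And>i j. i < n \<Longrightarrow> j < d \<Longrightarrow> N i j \<in> measurable P (count_space UNIV)"
    and N_poisson: "\<And>i j. i < n \<Longrightarrow> j < d \<Longrightarrow>
                      distr P (count_space UNIV) (N i j) = measure_pmf (poisson_pmf \<mu>)"
    and Y_subg: "\<And>i j k. i < n \<Longrightarrow> j < d \<Longrightarrow> k \<ge> 1 \<Longrightarrow>
                      centered_subgaussian P (\<lambda>x. Y i j k x - Mat i j) (\<sigma>\<^sup>2)"
    and indep: "prob_space.indep_vars P (\<lambda>_. borel)
                  (\<lambda>z x. case z of Inl (i, j) \<Rightarrow> real (N i j x) | Inr (i, j, k) \<Rightarrow> Y i j k x)
                  (Inl ` ({..<n} \<times> {..<d}) \<union> Inr ` ({..<n} \<times> {..<d} \<times> {1..}))"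
    and T_sub: "T \<subseteq> {..<n} \<times> {..<d}" and T_ne: "T \<noteq> {}"
    and delta: "0 < \<delta>" "\<delta> < 1"
  shows "measure P {x \<in> space P.
           (1 / real (card T)) * \<bar>\<Sum>(i, j)\<in>T. avg_obs N Y i j x - (1 - exp (- \<mu>)) * Mat i j\<bar>
           \<le> sqrt (2 * max 1 (\<sigma>\<^sup>2) * (exp 1)\<^sup>2 * ln (2 / \<delta>) * (1 - exp (- \<mu>)) / real (card T))
             + 2 * max 1 \<sigma> * ln (2 / \<delta>) / real (card T)} \<ge> 1 - \<delta>"
proof -
  interpret prob_space P by (rule P)
  define s where "s = max 1 \<sigma>"
  define lam where "lam = 1 - exp (- \<mu>)"
  define V where "V = real (card T) * (lam * (exp 1)\<^sup>2 * s\<^sup>2)"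
  define L where "L = ln (2 / \<delta>)"
  define A where "A = sqrt (2 * V * L) + 2 * s * L"
  define t where "t = min (sqrt (2 * L / V)) (1 / s)"
  define S where "S x = (\<Sum>(i, j)\<in>T. avg_obs N Y i j x - (1 - exp (- \<mu>)) * Mat i j)" for x
  define B where "B = sqrt (2 * max 1 (\<sigma>\<^sup>2) * (exp 1)\<^sup>2 * ln (2 / \<delta>) * (1 - exp (- \<mu>)) / real (card T))
             + 2 * max 1 \<sigma> * ln (2 / \<delta>) / real (card T)"
  have finT: "finite T" using T_sub finite_subset by blast
  have cT: "real (card T) > 0" using finT T_ne by (simp add: card_gt_0_iff)
  have s1: "s \<ge> 1" "s > 0" by (auto simp: s_def)
  have lam0: "lam > 0" using mu_pos by (simp add: lam_def)
  have V0: "V > 0" using cT lam0 s1 by (simp add: V_def)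
  have L0: "L > 0" using delta by (simp add: L_def)
  have t0: "t > 0" using V0 L0 s1 by (simp add: t_def)
  have ts: "\<bar>t\<bar> * s \<le> 1"
  proof -
    have "t \<le> 1 / s" by (simp add: t_def)
    then show ?thesis using t0 s1 by (simp add: field_simps)
  qed
  have rv: "\<And>w. w \<in> (Inl ` ({..<n} \<times> {..<d}) \<union> Inr ` ({..<n} \<times> {..<d} \<times> {1..})) \<Longrightarrow>
      random_variable borel (\<lambda>x. case w of Inl (i, j) \<Rightarrow> real (N i j x) | Inr (i, j, k) \<Rightarrow> Y i j k x)"
    using indep by (simp add: indep_vars_def)
  have Ym: "Y i j k \<in> borel_measurable P" if "i < n" "j < d" "k \<ge> 1" for i j k
    using rv[of "Inr (i, j, k)"] that by simp
  have Sm[measurable]: "S \<in> borel_measurable P"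
    unfolding S_def
  proof (rule borel_measurable_sum)
    fix c assume c: "c \<in> T"
    obtain i j where ij: "c = (i, j)" by (cases c)
    have ij': "i < n" "j < d" using c T_sub ij by auto
    have "avg_obs N Y i j \<in> borel_measurable P"
      by (rule avg_obs_meas) (use N_meas[OF ij'] Ym[OF ij'] in auto)
    then show "(\<lambda>x. case c of (i, j) \<Rightarrow> avg_obs N Y i j x - (1 - exp (- \<mu>)) * Mat i j) \<in> borel_measurable P"
      by (simp add: ij)
  qed
  have mgf: "(\<integral>\<^sup>+x. ennreal (exp (u * S x)) \<partial>P) \<le> ennreal (exp (V * u\<^sup>2 / 2))" if u: "\<bar>u\<bar> * s \<le> 1" for u
  proof -
    have "(\<integral>\<^sup>+x. ennreal (exp (u * S x)) \<partial>P)
       \<le> ennreal (exp (real (card T) * ((1 - exp (-\<mu>)) * (exp 1)\<^sup>2 * (max 1 \<sigma>)\<^sup>2 * u\<^sup>2 / 2)))"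
      unfolding S_def
      by (rule joint_mgf[OF Mat_range mu_pos sigma_pos N_meas N_poisson Y_subg indep T_sub])
         (use u in \<open>auto simp: s_def\<close>)
    also have "real (card T) * ((1 - exp (-\<mu>)) * (exp 1)\<^sup>2 * (max 1 \<sigma>)\<^sup>2 * u\<^sup>2 / 2) = V * u\<^sup>2 / 2"
      by (simp add: V_def lam_def s_def)
    finally show ?thesis .
  qed
  have ex: "exp (- t * A) * exp (V * t\<^sup>2 / 2) \<le> \<delta> / 2"
  proof -
    have "exp (- t * A) * exp (V * t\<^sup>2 / 2) = exp (- t * A + V * t\<^sup>2 / 2)" by (rule exp_add[symmetric])
    also have "\<dots> \<le> exp (- L)"
      using chernoff_real[OF V0 L0 s1(2) t_def] by (simp add: A_def)
    also have "exp (- L) = \<delta> / 2" using delta by (simp add: L_def exp_minus)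
    finally show ?thesis .
  qed
  have up: "emeasure P {x \<in> space P. S x \<ge> A} \<le> ennreal (\<delta> / 2)"
  proof -
    have "emeasure P {x \<in> space P. S x \<ge> A} \<le> ennreal (exp (- t * A)) * (\<integral>\<^sup>+x. ennreal (exp (t * S x)) * indicator (space P) x \<partial>P)"
      by (rule Chernoff_ineq_nn_integral_ge[OF t0]) auto
    also have "(\<integral>\<^sup>+x. ennreal (exp (t * S x)) * indicator (space P) x \<partial>P) = (\<integral>\<^sup>+x. ennreal (exp (t * S x)) \<partial>P)"
      by (rule nn_integral_cong) auto
    also have "ennreal (exp (- t * A)) * \<dots> \<le> ennreal (exp (- t * A)) * ennreal (exp (V * t\<^sup>2 / 2))"
      by (intro mult_left_mono mgf ts) auto
    also have "\<dots> = ennreal (exp (- t * A) * exp (V * t\<^sup>2 / 2))" by (simp add: ennreal_mult)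
    also have "\<dots> \<le> ennreal (\<delta> / 2)" using ex by (rule ennreal_leI)
    finally show ?thesis .
  qed
  have lo: "emeasure P {x \<in> space P. S x \<le> - A} \<le> ennreal (\<delta> / 2)"
  proof -
    have "emeasure P {x \<in> space P. S x \<le> - A} \<le> ennreal (exp (t * (- A))) * (\<integral>\<^sup>+x. ennreal (exp (- t * S x)) * indicator (space P) x \<partial>P)"
      by (rule Chernoff_ineq_nn_integral_le[OF t0]) auto
    also have "(\<integral>\<^sup>+x. ennreal (exp (- t * S x)) * indicator (space P) x \<partial>P) = (\<integral>\<^sup>+x. ennreal (exp ((- t) * S x)) \<partial>P)"
      by (rule nn_integral_cong) auto
    also have "ennreal (exp (t * (- A))) * \<dots> \<le> ennreal (exp (t * (- A))) * ennreal (exp (V * (- t)\<^sup>2 / 2))"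
      by (intro mult_left_mono mgf) (use ts in auto)
    also have "\<dots> = ennreal (exp (- t * A) * exp (V * t\<^sup>2 / 2))" by (simp add: ennreal_mult)
    also have "\<dots> \<le> ennreal (\<delta> / 2)" using ex by (rule ennreal_leI)
    finally show ?thesis .
  qed
  have up': "prob {x \<in> space P. S x \<ge> A} \<le> \<delta> / 2"
    using up delta by (simp add: emeasure_eq_measure ennreal_le_iff)
  have lo': "prob {x \<in> space P. S x \<le> - A} \<le> \<delta> / 2"
    using lo delta by (simp add: emeasure_eq_measure ennreal_le_iff)
  have BA: "real (card T) * B = A"
  proof -
    have m: "max 1 (\<sigma>\<^sup>2) = s\<^sup>2"
    proof (cases "\<sigma> \<le> 1")
      case True
      then have "\<sigma>\<^sup>2 \<le> 1" using sigma_pos by (simp add: power_le_one)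
      then show ?thesis using True by (simp add: s_def)
    next
      case False
      then have "1 \<le> \<sigma>\<^sup>2" by (simp add: one_le_power)
      then show ?thesis using False by (simp add: s_def)
    qed
    have "real (card T) * sqrt (2 * s\<^sup>2 * (exp 1)\<^sup>2 * L * lam / real (card T))
        = sqrt ((real (card T))\<^sup>2 * (2 * s\<^sup>2 * (exp 1)\<^sup>2 * L * lam / real (card T)))"
      by (simp only: real_sqrt_mult real_sqrt_abs)
    also have "(real (card T))\<^sup>2 * (2 * s\<^sup>2 * (exp 1)\<^sup>2 * L * lam / real (card T)) = 2 * V * L"
      using cT by (simp add: V_def power2_eq_square field_simps)
    finally have 1: "real (card T) * sqrt (2 * s\<^sup>2 * (exp 1)\<^sup>2 * L * lam / real (card T)) = sqrt (2 * V * L)" .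
    have 2: "real (card T) * (2 * s * L / real (card T)) = 2 * s * L" using cT by simp
    show ?thesis unfolding B_def A_def m using 1 2
      by (simp add: distrib_left L_def lam_def s_def)
  qed
  define G where "G = {x \<in> space P. (1 / real (card T)) * \<bar>S x\<bar> \<le> B}"
  have Gm: "G \<in> events" unfolding G_def by measurable
  have sub: "space P - G \<subseteq> {x \<in> space P. S x \<ge> A} \<union> {x \<in> space P. S x \<le> - A}"
  proof
    fix x assume x: "x \<in> space P - G"
    then have "B < (1 / real (card T)) * \<bar>S x\<bar>" by (auto simp: G_def)
    then have "real (card T) * B < \<bar>S x\<bar>" using cT by (simp add: field_simps)
    then have "A < \<bar>S x\<bar>" using BA by simp
    then show "x \<in> {x \<in> space P. S x \<ge> A} \<union> {x \<in> space P. S x \<le> - A}" using x by auto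
  qed
  have "prob (space P - G) \<le> prob ({x \<in> space P. S x \<ge> A} \<union> {x \<in> space P. S x \<le> - A})"
    by (rule finite_measure_mono[OF sub]) measurable
  also have "\<dots> \<le> prob {x \<in> space P. S x \<ge> A} + prob {x \<in> space P. S x \<le> - A}"
    by (rule measure_Un_le) measurable
  also have "\<dots> \<le> \<delta>" using up' lo' by simp
  finally have "prob (space P - G) \<le> \<delta>" .
  then have "prob G \<ge> 1 - \<delta>" using prob_compl[OF Gm] by simp
  then show ?thesis unfolding G_def S_def B_def lam_def .
qed

end
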